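(* Let $m\geq 1$, let $\zeta=\zeta_m$ be a primitive $m$th root of unity, let $C_m$ be cyclic of order $m$ with generator $c$, and consider the cyclic Wedderburn embedding \[ \omega_m\colon\mathbb{Z}[\zeta]C_m\to\prod_{j\in[0,m-1]}\mathbb{Z}[\zeta],\qquad c\mapsto(\zeta^j)_{j\in[0,m-1]}. \] Then: (i) $G_{\zeta^{-1}}^{\mathrm{T}}\,V_{\zeta}\,G_{\zeta^{-1}}=m\,(D_{\zeta^{-1}})^{-1}$, and this is a diagonal matrix whose $(i+1)$st diagonal entry, $i\in[0,m-1]$, equals \[ \frac{m\,\zeta^{(i^2)}}{\prod_{j\in[1,i]}(1-\zeta^j)}. \] (ii) The image of $\omega_m$ is \[ \Bigl\{(y_j)_{j\in[0,m-1]}\in\prod_{j\in[0,m-1]}\mathbb{Z}[\zeta]\;\Bigm|\;\sum_{j\in[i,m-1]}y_j\begin{bmatrix}j\\ i\end{bmatrix}_{\zeta^{-1}}\in\mathbb{Z}[\zeta]\cdot\frac{m}{\prod_{j\in[1,i]}(1-\zeta^j)}\ \text{for all }i\in[0,m-1]\Bigr\}, \] where the membership is taken inside $\mathbb{Q}(\zeta)$. (iii) A $\mathbb{Z}[\zeta]$-linear basis of the image of $\omega_m$ is given by the elements, indexed by $j\in[0,m-1]$, \[ \Bigl((-1)^k\zeta^{\binom{k}{2}}\frac{m}{\prod_{l\in[1,j]}(1-\zeta^l)}\begin{bmatrix}j\\ k\end{bmatrix}_{\zeta}\Bigr)_{k\in[0,m-1]}\in\prod_{k\in[0,m-1]}\mathbb{Z}[\zeta].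 \]
   Context: For an indeterminate $q$ and integers $i\ge0$, $j\in\mathbb{Z}$: $[i]=(q^i-1)/(q-1)$, $[i]!=\prod_{k=1}^i[k]$ (so $[0]!=1$), and the Gaussian binomial $\begin{bmatrix}i\\ j\end{bmatrix}=\begin{bmatrix}i\\ j\end{bmatrix}_q=[i]!/([j]![i-j]!)$ if $j\in[0,i]$ and $0$ otherwise; specializing $q$ to a root of unity gives the values written with subscript. The $m\times m$ matrices (rows and columns indexed by $[0,m-1]$) are $G_q=(\begin{bmatrix}i\\ j\end{bmatrix})_{i,j}$, $V_q=(q^{ij})_{i,j}$, and $D_q$ the diagonal matrix with $i$th entry $[i]!\,(q-1)^i\,q^{\binom{i}{2}}$; $^{\mathrm T}$ denotes transpose. Interval $[a,b]=\{x\in\mathbb{Z}:a\le x\le b\}$. *)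

theory Defs
  imports Complex_Main "HOL-Computational_Algebra.Polynomial"
begin

text \<open>q-integers, q-factorials and Gaussian binomials, evaluated at a complex number q.
  [i]_q is written as the polynomial 1 + q + ... + q^(i-1), which equals (q^i-1)/(q-1)
  for q \<noteq> 1 and is its polynomial specialization in general.\<close>
definition qint :: "complex \<Rightarrow> nat \<Rightarrow> complex" where
  "qint q i = (\<Sum>k<i. q ^ k)"

definition qfact :: "complex \<Rightarrow> nat \<Rightarrow> complex" where
  "qfact q i = (\<Prod>k\<in>{1..i}. qint q k)"

definition qbinom :: "complex \<Rightarrow> nat \<Rightarrow> nat \<Rightarrow> complex" where
  "qbinom q i j = (if j \<le> i then qfact q i / (qfact q j * qfact q (i - j)) else 0)"

text \<open>m x m matrices indexed by [0,m-1], represented as functions nat => nat => complex.\<close>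
definition Gmat :: "complex \<Rightarrow> nat \<Rightarrow> nat \<Rightarrow> complex" where
  "Gmat q i j = qbinom q i j"

definition Vmat :: "complex \<Rightarrow> nat \<Rightarrow> nat \<Rightarrow> complex" where
  "Vmat q i j = q ^ (i * j)"

definition Ddiag :: "complex \<Rightarrow> nat \<Rightarrow> complex" where
  "Ddiag q i = qfact q i * (q - 1) ^ i * q ^ (i choose 2)"

definition mtrans :: "(nat \<Rightarrow> nat \<Rightarrow> complex) \<Rightarrow> nat \<Rightarrow> nat \<Rightarrow> complex" where
  "mtrans A i j = A j i"

definition mmult :: "nat \<Rightarrow> (nat \<Rightarrow> nat \<Rightarrow> complex) \<Rightarrow> (nat \<Rightarrow> nat \<Rightarrow> complex)
    \<Rightarrow> nat \<Rightarrow> nat \<Rightarrow> complex" where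
  "mmult m A B i j = (\<Sum>k<m. A i k * B k j)"

definition Zz :: "complex \<Rightarrow> complex set" where
  "Zz z = {x. \<exists>p :: int poly. x = poly (map_poly of_int p) z}"

definition prodZ :: "nat \<Rightarrow> complex \<Rightarrow> (nat \<Rightarrow> complex) set" where
  "prodZ m z = {y. (\<forall>j<m. y j \<in> Zz z) \<and> (\<forall>j\<ge>m. y j = 0)}"

text \<open>An element sum_{k<m} a_k c^k of the group ring Z[zeta]C_m is represented by its
  coefficient vector a in prodZ m z; omega_m sends c to (zeta^j)_j.\<close>
definition omega :: "nat \<Rightarrow> complex \<Rightarrow> (nat \<Rightarrow> complex) \<Rightarrow> nat \<Rightarrow> complex" where
  "omega m z a = (\<lambda>j. if j < m then (\<Sum>k<m. a k * z ^ (j * k)) else 0)"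

definition omega_image :: "nat \<Rightarrow> complex \<Rightarrow> (nat \<Rightarrow> complex) set" where
  "omega_image m z = omega m z ` prodZ m z"

definition bvec :: "nat \<Rightarrow> complex \<Rightarrow> nat \<Rightarrow> nat \<Rightarrow> complex" where
  "bvec m z j = (\<lambda>k. if k < m then
      (-1) ^ k * z ^ (k choose 2) * (of_nat m / (\<Prod>l\<in>{1..j}. 1 - z ^ l)) * qbinom z j k
     else 0)"

end

theory Submission
  imports Defs
begin

section \<open>The ring Zz\<close>

lemma mp_add: "map_poly (of_int::int\<Rightarrow>complex) (p + q) = map_poly of_int p + map_poly of_int q"
  by (rule poly_eqI) (simp add: coeff_map_poly)
lemma mp_mult: "map_poly (of_int::int\<Rightarrow>complex) (p * q) = map_poly of_int p * map_poly of_int q"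
  by (rule poly_eqI) (simp add: coeff_map_poly coeff_mult)
lemma mp_uminus: "map_poly (of_int::int\<Rightarrow>complex) (- p) = - map_poly of_int p"
  by (rule poly_eqI) (simp add: coeff_map_poly)
lemma mp_const: "map_poly (of_int::int\<Rightarrow>complex) [:c:] = [:of_int c:]"
  by (rule poly_eqI) (simp add: coeff_map_poly coeff_pCons split: nat.split)
lemma mp_X: "map_poly (of_int::int\<Rightarrow>complex) [:0,1:] = [:0,1:]"
  by (rule poly_eqI) (simp add: coeff_map_poly coeff_pCons split: nat.split)

lemma Zz_add: "a \<in> Zz z \<Longrightarrow> b \<in> Zz z \<Longrightarrow> a + b \<in> Zz z"
  unfolding Zz_def by clarsimp (metis mp_add poly_add)
lemma Zz_mult: "a \<in> Zz z \<Longrightarrow> b \<in> Zz z \<Longrightarrow> a * b \<in> Zz z"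
  unfolding Zz_def by clarsimp (metis mp_mult poly_mult)
lemma Zz_uminus: "a \<in> Zz z \<Longrightarrow> - a \<in> Zz z"
  unfolding Zz_def by clarsimp (metis mp_uminus poly_minus)
lemma Zz_diff: "a \<in> Zz z \<Longrightarrow> b \<in> Zz z \<Longrightarrow> a - b \<in> Zz z"
  using Zz_add[of a z "-b"] Zz_uminus[of b z] by simp
lemma Zz_of_int: "of_int c \<in> Zz z"
  unfolding Zz_def by (rule CollectI, rule exI[of _ "[:c:]"]) (simp add: mp_const)
lemma Zz_0: "0 \<in> Zz z" using Zz_of_int[of 0 z] by simp
lemma Zz_1: "1 \<in> Zz z" using Zz_of_int[of 1 z] by simp
lemma Zz_of_nat: "of_nat c \<in> Zz z" using Zz_of_int[of "int c" z] by simp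
lemma Zz_z: "z \<in> Zz z"
  unfolding Zz_def by (rule CollectI, rule exI[of _ "[:0,1:]"]) (simp add: mp_X)
lemma Zz_pow: "a \<in> Zz z \<Longrightarrow> a ^ n \<in> Zz z"
  by (induction n) (auto intro: Zz_mult Zz_1)
lemma Zz_sum: "(\<And>i. i \<in> A \<Longrightarrow> f i \<in> Zz z) \<Longrightarrow> sum f A \<in> Zz z"
  by (induction A rule: infinite_finite_induct) (auto intro: Zz_add Zz_0)
lemma Zz_prod: "(\<And>i. i \<in> A \<Longrightarrow> f i \<in> Zz z) \<Longrightarrow> prod f A \<in> Zz z"
  by (induction A rule: infinite_finite_induct) (auto intro: Zz_mult Zz_1)
lemma Zz_m1pow: "(-1) ^ n \<in> Zz z"
  by (intro Zz_pow Zz_uminus Zz_1)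

section \<open>q-numbers\<close>

definition qok :: "complex \<Rightarrow> nat \<Rightarrow> bool" where
  "qok q N \<longleftrightarrow> (\<forall>k. 1 \<le> k \<longrightarrow> k \<le> N \<longrightarrow> qint q k \<noteq> 0)"

lemma qok_nz: "qok q N \<Longrightarrow> 1 \<le> k \<Longrightarrow> k \<le> N \<Longrightarrow> qint q k \<noteq> 0"
  by (simp add: qok_def)

lemma qint_Suc: "qint q (Suc n) = qint q n + q ^ n"
  by (simp add: qint_def)
lemma qint_add: "qint q (a + b) = qint q a + q ^ a * qint q b"
  by (induction b) (simp_all add: qint_def algebra_simps power_add)
lemma qint_mult: "qint q n * (q - 1) = q ^ n - 1"
  by (induction n) (simp_all add: qint_Suc algebra_simps, simp add: qint_def)
lemma qfact_0[simp]: "qfact q 0 = 1"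
  by (simp add: qfact_def)
lemma qfact_Suc: "qfact q (Suc n) = qfact q n * qint q (Suc n)"
  by (simp add: qfact_def atLeastAtMostSuc_conv mult.commute)
lemma qfact_nz: "qok q N \<Longrightarrow> n \<le> N \<Longrightarrow> qfact q n \<noteq> 0"
  by (induction n) (auto simp: qfact_Suc qok_def)
lemma qbinom_0: assumes "qok q N" "n \<le> N" shows "qbinom q n 0 = 1"
  using qfact_nz[OF assms] by (simp add: qbinom_def)
lemma qbinom_gt: "n < k \<Longrightarrow> qbinom q n k = 0"
  by (simp add: qbinom_def)
lemma qbinom_diag: assumes "qok q N" "n \<le> N" shows "qbinom q n n = 1"
  using qfact_nz[OF assms] by (simp add: qbinom_def)

lemma fa1: fixes A B C a b Q :: complex
  shows "A\<noteq>0 \<Longrightarrow> B\<noteq>0 \<Longrightarrow> a\<noteq>0 \<Longrightarrow> b\<noteq>0 \<Longrightarrow> C*(a+Q*b)/((A*a)*(B*b)) = C/(A*(B*b)) + Q*(C/((A*a)*B))"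
  by (simp add: field_simps)
lemma fa2: fixes A B C a b :: complex
  shows "A\<noteq>0 \<Longrightarrow> B\<noteq>0 \<Longrightarrow> a\<noteq>0 \<Longrightarrow> b\<noteq>0 \<Longrightarrow> C/((A*a)*B) * a = C/(A*(B*b)) * b"
  by (simp add: field_simps)

lemma qpascal:
  assumes ok: "qok q N" and n: "Suc n \<le> N"
  shows "qbinom q (Suc n) (Suc k) = qbinom q n k + q ^ Suc k * qbinom q n (Suc k)"
proof (cases "n < k")
  case True then show ?thesis by (simp add: qbinom_gt)
next
  case False
  show ?thesis
  proof (cases "k = n")
    case True then show ?thesis using qbinom_diag[OF ok] n by (simp add: qbinom_gt)
  next
    case False
    with \<open>\<not> n < k\<close> obtain r where r: "n = k + Suc r" by (metis add_Suc_right less_imp_Suc_add linorder_neqE_nat)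
    have nz: "qfact q k \<noteq> 0" "qfact q r \<noteq> 0" "qint q (Suc k) \<noteq> 0" "qint q (Suc r) \<noteq> 0"
      using qfact_nz[OF ok, of k] qfact_nz[OF ok, of r] n r qok_nz[OF ok, of "Suc k"] qok_nz[OF ok, of "Suc r"] by auto
    have e1: "Suc n - Suc k = Suc r" "n - k = Suc r" "n - Suc k = r" using r by auto
    have e2: "qint q (Suc n) = qint q (Suc k) + q ^ Suc k * qint q (Suc r)"
      using qint_add[of q "Suc k" "Suc r"] r by simp
    have "qbinom q (Suc n) (Suc k) = qfact q n * (qint q (Suc k) + q ^ Suc k * qint q (Suc r))
       / ((qfact q k * qint q (Suc k)) * (qfact q r * qint q (Suc r)))"
      using \<open>\<not> n < k\<close> unfolding qbinom_def e1 e2[symmetric] qfact_Suc by simp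
    moreover have "qbinom q n k = qfact q n / (qfact q k * (qfact q r * qint q (Suc r)))"
      using \<open>\<not> n < k\<close> unfolding qbinom_def e1 qfact_Suc by simp
    moreover have "qbinom q n (Suc k) = qfact q n / ((qfact q k * qint q (Suc k)) * qfact q r)"
      using \<open>\<not> n < k\<close> False unfolding qbinom_def e1 qfact_Suc by simp
    ultimately show ?thesis using fa1[OF nz] by simp
  qed
qed

lemma qbinom_step:
  assumes ok: "qok q N" and kj: "k < j" and jN: "j \<le> N"
  shows "qbinom q j (Suc k) * qint q (Suc k) = qbinom q j k * qint q (j - k)"
proof -
  obtain r where r: "j = k + Suc r" using kj by (metis add_Suc_right less_imp_Suc_add)
  have nz: "qfact q k \<noteq> 0" "qfact q r \<noteq> 0" "qint q (Suc k) \<noteq> 0" "qint q (Suc r) \<noteq> 0"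
      using qfact_nz[OF ok, of k] qfact_nz[OF ok, of r] jN r qok_nz[OF ok, of "Suc k"] qok_nz[OF ok, of "Suc r"] by auto
  have e1: "j - k = Suc r" "j - Suc k = r" using r by auto
  have "qbinom q j (Suc k) = qfact q j / ((qfact q k * qint q (Suc k)) * qfact q r)"
    using kj unfolding qbinom_def e1 qfact_Suc by simp
  moreover have "qbinom q j k = qfact q j / (qfact q k * (qfact q r * qint q (Suc r)))"
    using kj unfolding qbinom_def e1 qfact_Suc by simp
  ultimately show ?thesis using fa2[OF nz] e1 by simp
qed

lemma qbinom_Zz:
  assumes ok: "qok q N" and qZ: "q \<in> Zz z"
  shows "n \<le> N \<Longrightarrow> qbinom q n k \<in> Zz z"
proof (induction n arbitrary: k)
  case 0 then show ?case using qbinom_0[OF ok] by (cases k) (auto simp: qbinom_gt Zz_0 Zz_1)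
next
  case (Suc n)
  show ?case
  proof (cases k)
    case 0 then show ?thesis using qbinom_0[OF ok Suc.prems] by (simp add: Zz_1)
  next
    case (Suc k')
    then show ?thesis using Suc.IH[of k'] Suc.IH[of "Suc k'"] Suc.prems qpascal[OF ok Suc.prems]
      by (auto intro!: Zz_add Zz_mult Zz_pow qZ)
  qed
qed

definition Pq :: "complex \<Rightarrow> nat \<Rightarrow> complex \<Rightarrow> complex" where
  "Pq q k x = (\<Prod>t<k. x - q ^ t)"

lemma Pq_0[simp]: "Pq q 0 x = 1" by (simp add: Pq_def)
lemma Pq_Suc: "Pq q (Suc k) x = Pq q k x * (x - q ^ k)" by (simp add: Pq_def)

lemma newton:
  assumes ok: "qok q N"
  shows "i \<le> N \<Longrightarrow> x ^ i = (\<Sum>k\<le>i. qbinom q i k * Pq q k x)"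
proof (induction i)
  case 0 then show ?case using qbinom_0[OF ok] by simp
next
  case (Suc i)
  have IH: "x ^ i = (\<Sum>k\<le>i. qbinom q i k * Pq q k x)" using Suc by simp
  have "x ^ Suc i = (\<Sum>k\<le>i. qbinom q i k * (x * Pq q k x))"
    by (simp add: IH sum_distrib_left algebra_simps)
  also have "\<dots> = (\<Sum>k\<le>i. qbinom q i k * Pq q (Suc k) x) + (\<Sum>k\<le>i. q ^ k * qbinom q i k * Pq q k x)"
    by (simp add: Pq_Suc sum.distrib[symmetric] algebra_simps)
  also have "(\<Sum>k\<le>i. q ^ k * qbinom q i k * Pq q k x) = (\<Sum>k\<le>Suc i. q ^ k * qbinom q i k * Pq q k x)"
    by (simp add: qbinom_gt)
  also have "\<dots> = 1 + (\<Sum>k\<le>i. q ^ Suc k * qbinom q i (Suc k) * Pq q (Suc k) x)"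
    using qbinom_0[OF ok, of i] Suc.prems by (simp add: sum.atMost_Suc_shift del: sum.atMost_Suc power_Suc)
  finally have "x ^ Suc i = 1 + (\<Sum>k\<le>i. (qbinom q i k + q ^ Suc k * qbinom q i (Suc k)) * Pq q (Suc k) x)"
    by (simp add: sum.distrib algebra_simps)
  also have "\<dots> = 1 + (\<Sum>k\<le>i. qbinom q (Suc i) (Suc k) * Pq q (Suc k) x)"
    using qpascal[OF ok Suc.prems] by simp
  also have "\<dots> = (\<Sum>k\<le>Suc i. qbinom q (Suc i) k * Pq q k x)"
    using qbinom_0[OF ok Suc.prems] by (simp add: sum.atMost_Suc_shift del: sum.atMost_Suc)
  finally show ?case .
qed

lemma choose2_Suc: "Suc k choose 2 = (k choose 2) + k"
  by (simp add: numeral_2_eq_2)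

lemma choose2_0[simp]: "0 choose 2 = 0" by simp

lemma Ddiag_Suc: "Ddiag q (Suc k) = Ddiag q k * (qint q (Suc k) * (q - 1) * q ^ k)"
  by (simp add: Ddiag_def qfact_Suc choose2_Suc power_add algebra_simps)

lemma Pq_qpow:
  assumes ok: "qok q N" and jN: "j \<le> N"
  shows "Pq q k (q ^ j) = qbinom q j k * Ddiag q k"
proof (induction k)
  case 0 then show ?case using qbinom_0[OF ok jN] by (simp add: Ddiag_def)
next
  case (Suc k)
  show ?case
  proof (cases "k < j")
    case True
    have "qbinom q j (Suc k) * Ddiag q (Suc k) = (qbinom q j (Suc k) * qint q (Suc k)) * (Ddiag q k * (q - 1) * q ^ k)"
      by (simp add: Ddiag_Suc algebra_simps)
    also have "\<dots> = qbinom q j k * Ddiag q k * ((qint q (j - k) * (q - 1)) * q ^ k)"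
      by (subst qbinom_step[OF ok True jN]) (simp add: algebra_simps)
    also have "\<dots> = qbinom q j k * Ddiag q k * ((q ^ (j - k) - 1) * q ^ k)"
      by (simp only: qint_mult)
    also have "\<dots> = qbinom q j k * Ddiag q k * (q ^ j - q ^ k)"
      using True by (simp add: algebra_simps power_add[symmetric])
    finally show ?thesis by (simp add: Pq_Suc Suc.IH)
  next
    case False
    then have "qbinom q j (Suc k) = 0" by (simp add: qbinom_gt)
    moreover have "Pq q (Suc k) (q ^ j) = 0"
    proof (cases "k = j")
      case True then show ?thesis by (simp add: Pq_Suc)
    next
      case False
      with \<open>\<not> k < j\<close> have "qbinom q j k = 0" by (simp add: qbinom_gt)
      then show ?thesis by (simp add: Pq_Suc Suc.IH)
    qed
    ultimately show ?thesis by simp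
  qed
qed

definition sg :: "complex \<Rightarrow> nat \<Rightarrow> complex" where
  "sg z l = (-1) ^ l * z ^ (l choose 2)"

lemma sg_0[simp]: "sg z 0 = 1" by (simp add: sg_def)
lemma sg_Suc: "sg z (Suc l) = - sg z l * z ^ l"
  by (simp add: sg_def choose2_Suc power_add)

lemma gauss:
  assumes ok: "qok z N"
  shows "n \<le> N \<Longrightarrow> (\<Prod>t<n. 1 - x * z ^ t) = (\<Sum>l\<le>n. qbinom z n l * sg z l * x ^ l)"
proof (induction n arbitrary: x)
  case 0 then show ?case using qbinom_0[OF ok] by simp
next
  case (Suc n)
  define T where "T l = qbinom z n l * sg z l * z ^ l * x ^ l" for l
  have "(\<Prod>t<Suc n. 1 - x * z ^ t) = (1 - x) * (\<Prod>t<n. 1 - (x * z) * z ^ t)"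
    by (subst prod.lessThan_Suc_shift) (simp add: algebra_simps del: prod.lessThan_Suc)
  also have "\<dots> = (1 - x) * (\<Sum>l\<le>n. T l)"
    using Suc.IH[of "x * z"] Suc.prems by (simp add: T_def power_mult_distrib mult_ac)
  also have "\<dots> = (\<Sum>l\<le>n. T l) - (\<Sum>l\<le>n. x * T l)"
    by (simp add: sum_distrib_left left_diff_distrib sum_subtractf)
  finally have L: "(\<Prod>t<Suc n. 1 - x * z ^ t) = (\<Sum>l\<le>n. T l) - (\<Sum>l\<le>n. x * T l)" .
  have A1: "(\<Sum>l\<le>n. qbinom z n l * sg z (Suc l) * x ^ Suc l) = - (\<Sum>l\<le>n. x * T l)"
    unfolding sum_negf[symmetric] by (rule sum.cong) (simp_all add: T_def sg_Suc)
  have "(\<Sum>l\<le>n. z ^ Suc l * qbinom z n (Suc l) * sg z (Suc l) * x ^ Suc l)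
      = (\<Sum>l\<le>Suc n. z ^ l * qbinom z n l * sg z l * x ^ l) - 1"
    using qbinom_0[OF ok, of n] Suc.prems by (simp add: sum.atMost_Suc_shift del: sum.atMost_Suc power_Suc)
  also have "\<dots> = (\<Sum>l\<le>n. T l) - 1"
    by (simp add: qbinom_gt T_def mult_ac)
  finally have A2: "(\<Sum>l\<le>n. z ^ Suc l * qbinom z n (Suc l) * sg z (Suc l) * x ^ Suc l) = (\<Sum>l\<le>n. T l) - 1" .
  have "(\<Sum>l\<le>Suc n. qbinom z (Suc n) l * sg z l * x ^ l)
      = 1 + (\<Sum>l\<le>n. qbinom z (Suc n) (Suc l) * sg z (Suc l) * x ^ Suc l)"
    using qbinom_0[OF ok Suc.prems] by (simp add: sum.atMost_Suc_shift del: sum.atMost_Suc power_Suc)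
  also have "\<dots> = 1 + (\<Sum>l\<le>n. qbinom z n l * sg z (Suc l) * x ^ Suc l)
     + (\<Sum>l\<le>n. z ^ Suc l * qbinom z n (Suc l) * sg z (Suc l) * x ^ Suc l)"
  proof -
    have "(\<Sum>l\<le>n. qbinom z (Suc n) (Suc l) * sg z (Suc l) * x ^ Suc l) = (\<Sum>l\<le>n. qbinom z n l * sg z (Suc l) * x ^ Suc l
       + z ^ Suc l * qbinom z n (Suc l) * sg z (Suc l) * x ^ Suc l)"
      by (rule sum.cong) (simp_all add: qpascal[OF ok Suc.prems] algebra_simps)
    then show ?thesis by (simp add: sum.distrib)
  qed
  finally show ?case using L A1 A2 by simp
qed

lemma Pq_rev:
  assumes qz: "q * z = 1"
  shows "Pq q k x = (-1) ^ k * q ^ (k choose 2) * (\<Prod>t<k. 1 - x * z ^ t)"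
proof (induction k)
  case 0 then show ?case by simp
next
  case (Suc k)
  have qk: "q ^ k * z ^ k = 1" using qz by (simp add: power_mult_distrib[symmetric])
  have "x - q ^ k = (- (q ^ k)) * (1 - x * z ^ k)"
    using qk by (simp add: algebra_simps)
  then show ?case by (simp add: Pq_Suc Suc.IH choose2_Suc power_add)
qed

lemma Ddiag_P:
  assumes qz: "q * z = 1"
  shows "Ddiag q i * z ^ (i ^ 2) = (\<Prod>j\<in>{1..i}. 1 - z ^ j)"
proof (induction i)
  case 0 then show ?case by (simp add: Ddiag_def)
next
  case (Suc i)
  have e: "z ^ (Suc i ^ 2) = z ^ (i ^ 2) * (z ^ i * z ^ Suc i)"
    by (simp add: power2_eq_square power_add[symmetric] algebra_simps)
  have f: "qint q (Suc i) * (q - 1) * q ^ i * (z ^ i * z ^ Suc i) = 1 - z ^ Suc i"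
  proof -
    have "qint q (Suc i) * (q - 1) * q ^ i * (z ^ i * z ^ Suc i) = (q ^ Suc i - 1) * q ^ i * (z ^ i * z ^ Suc i)"
      by (simp only: qint_mult)
    also have "\<dots> = (q ^ Suc i - 1) * z ^ Suc i * (q * z) ^ i"
      by (simp add: power_mult_distrib mult_ac)
    also have "\<dots> = (q ^ Suc i - 1) * z ^ Suc i" using qz by simp
    also have "\<dots> = (q * z) ^ Suc i - z ^ Suc i" by (simp add: power_mult_distrib left_diff_distrib)
    finally show ?thesis using qz by simp
  qed
  have "Ddiag q (Suc i) * z ^ (Suc i ^ 2) = (Ddiag q i * z ^ (i ^ 2)) * (qint q (Suc i) * (q - 1) * q ^ i * (z ^ i * z ^ Suc i))"
    by (simp add: Ddiag_Suc e algebra_simps)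
  also have "\<dots> = (\<Prod>j\<in>{1..i}. 1 - z ^ j) * (1 - z ^ Suc i)" using Suc f by simp
  finally show ?case by (simp add: atLeastAtMostSuc_conv)
qed

lemma lower_inj:
  fixes L :: "nat \<Rightarrow> nat \<Rightarrow> complex"
  assumes d: "\<And>j. j < m \<Longrightarrow> L j j = 1"
    and t: "\<And>j k. j < m \<Longrightarrow> k < m \<Longrightarrow> j < k \<Longrightarrow> L j k = 0"
    and s: "\<And>j. j < m \<Longrightarrow> (\<Sum>k<m. L j k * r k) = 0"
  shows "j < m \<Longrightarrow> r j = 0"
proof (induction j rule: less_induct)
  case (less j)
  have "(\<Sum>k<m. L j k * r k) = (\<Sum>k<m. if k = j then r j else 0)"
  proof (rule sum.cong)
    fix k assume k: "k \<in> {..<m}"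
    show "L j k * r k = (if k = j then r j else 0)"
      using less d[of j] t[of j k] k by (cases "k < j"; cases "k = j") auto
  qed simp
  then show ?case using s[OF less.prems] less.prems by simp
qed

lemma upper_inj:
  fixes U :: "nat \<Rightarrow> nat \<Rightarrow> complex"
  assumes d: "\<And>j. j < m \<Longrightarrow> U j j = 1"
    and t: "\<And>j k. j < m \<Longrightarrow> k < m \<Longrightarrow> k < j \<Longrightarrow> U j k = 0"
    and s: "\<And>j. j < m \<Longrightarrow> (\<Sum>k<m. U j k * r k) = 0"
  shows "j < m \<Longrightarrow> r j = 0"
proof (induction j rule: measure_induct_rule[of "\<lambda>j. m - j"])
  case (less j)
  have "(\<Sum>k<m. U j k * r k) = (\<Sum>k<m. if k = j then r j else 0)"
  proof (rule sum.cong)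
    fix k assume k: "k \<in> {..<m}"
    show "U j k * r k = (if k = j then r j else 0)"
      using less d[of j] t[of j k] k by (cases "j < k"; cases "k = j") auto
  qed simp
  then show ?case using s[OF less.prems] less.prems by simp
qed

lemma lower_solve:
  fixes L :: "nat \<Rightarrow> nat \<Rightarrow> complex"
  assumes d: "\<And>j. j < m \<Longrightarrow> L j j = 1"
    and t: "\<And>j k. j < m \<Longrightarrow> k < m \<Longrightarrow> j < k \<Longrightarrow> L j k = 0"
    and Z: "\<And>j k. j < m \<Longrightarrow> k < m \<Longrightarrow> L j k \<in> Zz z"
    and b: "\<And>j. j < m \<Longrightarrow> b j \<in> Zz z"
  shows "\<exists>x. (\<forall>j. x j \<in> Zz z) \<and> (\<forall>j\<ge>m. x j = 0) \<and> (\<forall>j<m. (\<Sum>k<m. L j k * x k) = b j)"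
proof -
  have "n \<le> m \<Longrightarrow> \<exists>x. (\<forall>j. x j \<in> Zz z) \<and> (\<forall>j\<ge>n. x j = 0) \<and> (\<forall>j<n. (\<Sum>k<m. L j k * x k) = b j)" for n
  proof (induction n)
    case 0 then show ?case by (intro exI[of _ "\<lambda>_. 0"]) (simp add: Zz_0)
  next
    case (Suc n)
    then obtain x where x1: "\<forall>j. x j \<in> Zz z" and x2: "\<forall>j\<ge>n. x j = 0"
      and x3: "\<forall>j<n. (\<Sum>k<m. L j k * x k) = b j" by auto
    define S where "S = (\<Sum>k<m. L n k * x k)"
    define x' where "x' = x(n := b n - S)"
    have SZ: "S \<in> Zz z" unfolding S_def using Suc.prems x1 by (auto intro!: Zz_sum Zz_mult Z)
    have "\<forall>j. x' j \<in> Zz z" using x1 SZ b[of n] Suc.prems by (auto simp: x'_def intro!: Zz_diff)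
    moreover have "\<forall>j\<ge>Suc n. x' j = 0" using x2 by (auto simp: x'_def)
    moreover have "\<forall>j<Suc n. (\<Sum>k<m. L j k * x' k) = b j"
    proof (intro allI impI)
      fix j assume j: "j < Suc n"
      show "(\<Sum>k<m. L j k * x' k) = b j"
      proof (cases "j < n")
        case True
        have "(\<Sum>k<m. L j k * x' k) = (\<Sum>k<m. L j k * x k)"
          by (rule sum.cong) (use True Suc.prems t[of j n] in \<open>auto simp: x'_def\<close>)
        then show ?thesis using x3 True by simp
      next
        case False
        then have jn: "j = n" using j by simp
        have "(\<Sum>k<m. L n k * x' k) = (\<Sum>k<m. L n k * x k + (if k = n then b n - S else 0))"
          by (rule sum.cong) (use x2 d[of n] Suc.prems in \<open>auto simp: x'_def\<close>)
        also have "\<dots> = S + (b n - S)" unfolding sum.distrib S_def[symmetric] using Suc.prems by simp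
        finally show ?thesis using jn by simp
      qed
    qed
    ultimately show ?case by blast
  qed
  from this[of m] show ?thesis by auto
qed

lemma mmult_assoc: "mmult m (mmult m A B) C i j = mmult m A (mmult m B C) i j"
  unfolding mmult_def sum_distrib_left sum_distrib_right by (subst sum.swap) (simp add: mult.assoc)

lemma qok_gen: assumes "\<And>k. 0 < k \<Longrightarrow> k \<le> N \<Longrightarrow> w ^ k \<noteq> 1" shows "qok w N"
  unfolding qok_def
proof (intro allI impI)
  fix k assume "1 \<le> k" "k \<le> N"
  then have "w ^ k - 1 \<noteq> 0" using assms by simp
  then show "qint w k \<noteq> 0" using qint_mult[of w k] by auto
qed

locale rou =
  fixes m :: nat and z :: complex
  assumes m: "m \<ge> 1" and root: "z ^ m = 1" and prim: "\<And>k. 0 < k \<Longrightarrow> k < m \<Longrightarrow> z ^ k \<noteq> 1"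
begin

lemma z_nz: "z \<noteq> 0" using root m by (cases "z = 0") (auto simp: power_0_left)

lemma qz1: "inverse z * z = 1" using z_nz by simp

lemma q_pow: "inverse z = z ^ (m - 1)"
proof -
  have "z ^ (m - 1) * z = 1" using root m power_minus_mult[of m z] by simp
  then show ?thesis using z_nz by (simp add: field_simps)
qed

lemma q_Zz: "inverse z \<in> Zz z" by (simp add: q_pow Zz_pow Zz_z)

lemma z_inj: assumes "i < m" "j < m" "z ^ i = z ^ j" shows "i = j"
proof (rule ccontr)
  assume ne: "i \<noteq> j"
  { fix a b assume ab: "a < b" "b < m" "z ^ a = z ^ b"
    have "z ^ b = z ^ a * z ^ (b - a)" using ab(1) by (simp add: power_add[symmetric])
    then have "z ^ a * z ^ (b - a) = z ^ a * 1" using ab by simp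
    then have "z ^ (b - a) = 1" using z_nz by simp
    moreover have "b - a < m" "0 < b - a" using ab by auto
    ultimately have False using prim[of "b - a"] by simp }
  then show False using assms ne by (metis linorder_neqE_nat)
qed

lemma qok_z: "qok z (m - 1)" by (rule qok_gen) (use prim in auto)

lemma qok_q: "qok (inverse z) (m - 1)"
proof (rule qok_gen)
  fix k assume "0 < k" "k \<le> m - 1"
  then have "z ^ k \<noteq> 1" using prim m by simp
  then show "inverse z ^ k \<noteq> 1" by (simp add: power_inverse)
qed

lemma P_nz: "k < m \<Longrightarrow> (\<Prod>j\<in>{1..k}. 1 - z ^ j) \<noteq> 0"
  using prim by auto

lemma D_P: "Ddiag (inverse z) k * z ^ (k ^ 2) = (\<Prod>j\<in>{1..k}. 1 - z ^ j)"
  by (rule Ddiag_P) (rule qz1)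

lemma D_nz: "k < m \<Longrightarrow> Ddiag (inverse z) k \<noteq> 0"
  using D_P[of k] P_nz[of k] by auto

lemma G_diag: "j < m \<Longrightarrow> Gmat (inverse z) j j = 1"
  unfolding Gmat_def by (rule qbinom_diag[OF qok_q]) simp

lemma G_up: "j < k \<Longrightarrow> Gmat (inverse z) j k = 0"
  unfolding Gmat_def by (rule qbinom_gt)

lemma G_Zz: "j < m \<Longrightarrow> Gmat (inverse z) j k \<in> Zz z"
  unfolding Gmat_def by (rule qbinom_Zz[OF qok_q q_Zz]) simp

lemma orth: assumes "i < m" "j < m"
  shows "(\<Sum>k<m. z ^ (i * k) * inverse z ^ (k * j)) = (if i = j then of_nat m else 0)"
proof -
  define w where "w = z ^ i * inverse z ^ j"
  have e: "z ^ (i * k) * inverse z ^ (k * j) = w ^ k" for k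
    by (simp add: w_def power_mult_distrib power_mult[symmetric] mult.commute)
  show ?thesis
  proof (cases "i = j")
    case True
    then have "w = 1" using z_nz by (simp add: w_def power_inverse)
    then show ?thesis using True unfolding e by simp
  next
    case False
    have "w \<noteq> 1"
    proof
      assume "w = 1"
      then have "z ^ i = z ^ j" using z_nz by (simp add: w_def power_inverse field_simps)
      then show False using z_inj assms False by blast
    qed
    moreover have "w ^ m = 1"
      by (simp add: w_def power_mult_distrib power_mult[symmetric] mult.commute[of _ m] power_mult root power_inverse)
    ultimately show ?thesis using False unfolding e by (simp add: sum_gp_strict)
  qed
qed

end

context rou begin

abbreviation "GG \<equiv> Gmat (inverse z)"
abbreviation "DD \<equiv> Ddiag (inverse z)"

lemma Vq_fact:
  assumes i: "i < m" and j: "j < m"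
  shows "inverse z ^ (i * j) = (\<Sum>k<m. GG i k * DD k * GG j k)"
proof -
  have "inverse z ^ (i * j) = (inverse z ^ j) ^ i" by (simp add: power_mult[symmetric] mult.commute)
  also have "\<dots> = (\<Sum>k\<le>i. qbinom (inverse z) i k * Pq (inverse z) k (inverse z ^ j))"
    by (rule newton[OF qok_q]) (use i in simp)
  also have "\<dots> = (\<Sum>k\<le>i. GG i k * DD k * GG j k)"
    by (rule sum.cong) (use j in \<open>simp_all add: Pq_qpow[OF qok_q] Gmat_def\<close>)
  also have "\<dots> = (\<Sum>k<m. GG i k * DD k * GG j k)"
    by (rule sum.mono_neutral_left) (use i in \<open>auto simp: G_up\<close>)
  finally show ?thesis .
qed

lemma S1:
  assumes i: "i < m" and j: "j < m"
  shows "(\<Sum>k<m. mmult m (Vmat z) GG i k * DD k * GG j k) = (if i = j then of_nat m else 0)"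
proof -
  have "(\<Sum>k<m. mmult m (Vmat z) GG i k * DD k * GG j k)
      = (\<Sum>l<m. z ^ (i * l) * (\<Sum>k<m. GG l k * DD k * GG j k))"
    unfolding mmult_def Vmat_def sum_distrib_right sum_distrib_left
    by (subst sum.swap) (simp add: mult.assoc)
  also have "\<dots> = (\<Sum>l<m. z ^ (i * l) * inverse z ^ (l * j))"
    by (rule sum.cong) (use j in \<open>simp_all add: Vq_fact\<close>)
  also have "\<dots> = (if i = j then of_nat m else 0)" by (rule orth[OF i j])
  finally show ?thesis .
qed

lemma M_eq:
  assumes a: "a < m" and k: "k < m"
  shows "mmult m (mmult m (mtrans GG) (Vmat z)) GG a k = (if a = k then of_nat m / DD k else 0)"
proof -
  define N where "N = mmult m (Vmat z) GG"
  define M where "M = mmult m (mmult m (mtrans GG) (Vmat z)) GG"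
  have Me: "M a k = (\<Sum>i<m. GG i a * N i k)" for a k
    unfolding M_def N_def mmult_assoc by (simp add: mmult_def mtrans_def)
  have S3: "(\<Sum>k<m. M a k * DD k * GG j k) = of_nat m * GG j a" if j: "j < m" for j
  proof -
    have "(\<Sum>k<m. M a k * DD k * GG j k) = (\<Sum>i<m. GG i a * (\<Sum>k<m. N i k * DD k * GG j k))"
      unfolding Me sum_distrib_right sum_distrib_left
      by (subst sum.swap) (simp add: mult.assoc)
    also have "\<dots> = (\<Sum>i<m. if i = j then GG j a * of_nat m else 0)"
      by (rule sum.cong) (use j in \<open>simp_all add: N_def S1\<close>)
    also have "\<dots> = of_nat m * GG j a" using j by simp
    finally show ?thesis .
  qed
  define r where "r k = M a k * DD k - (if k = a then of_nat m else 0)" for k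
  have "r k = 0"
  proof (rule lower_inj[where L = GG and m = m])
    fix j assume j: "j < m"
    have "(\<Sum>k<m. GG j k * r k) = (\<Sum>k<m. M a k * DD k * GG j k) - (\<Sum>k<m. if k = a then GG j a * of_nat m else 0)"
      unfolding sum_subtractf[symmetric] by (rule sum.cong) (auto simp: r_def algebra_simps)
    also have "\<dots> = 0" using S3[OF j] a by simp
    finally show "(\<Sum>k<m. GG j k * r k) = 0" .
  qed (use k in \<open>simp_all add: G_diag G_up\<close>)
  then have "M a k * DD k = (if k = a then of_nat m else 0)" by (simp add: r_def)
  then show ?thesis using D_nz[OF k] unfolding M_def[symmetric] by (auto simp: field_simps)
qed

end

context rou begin

definition pm :: "nat \<Rightarrow> nat \<Rightarrow> complex" where
  "pm k l = (-1) ^ k * inverse z ^ (k choose 2) * (qbinom z k l * sg z l)"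

lemma Pq_exp:
  assumes k: "k < m"
  shows "Pq (inverse z) k x = (\<Sum>l<m. pm k l * x ^ l)"
proof -
  have "Pq (inverse z) k x = (-1) ^ k * inverse z ^ (k choose 2) * (\<Prod>t<k. 1 - x * z ^ t)"
    by (rule Pq_rev[OF qz1])
  also have "(\<Prod>t<k. 1 - x * z ^ t) = (\<Sum>l\<le>k. qbinom z k l * sg z l * x ^ l)"
    by (rule gauss[OF qok_z]) (use k in simp)
  also have "\<dots> = (\<Sum>l<m. qbinom z k l * sg z l * x ^ l)"
    by (rule sum.mono_neutral_left) (use k in \<open>auto simp: qbinom_gt\<close>)
  finally show ?thesis by (simp add: pm_def sum_distrib_left mult_ac)
qed

definition Gp :: "nat \<Rightarrow> nat \<Rightarrow> complex" where
  "Gp i l = (\<Sum>k<m. GG i k * pm k l)"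

lemma T1:
  assumes i: "i < m"
  shows "z ^ (s * i) = (\<Sum>l<m. Gp i l * z ^ (s * l))"
proof -
  have "z ^ (s * i) = (z ^ s) ^ i" by (simp add: power_mult)
  also have "\<dots> = (\<Sum>k\<le>i. qbinom (inverse z) i k * Pq (inverse z) k (z ^ s))"
    by (rule newton[OF qok_q]) (use i in simp)
  also have "\<dots> = (\<Sum>k<m. GG i k * Pq (inverse z) k (z ^ s))"
    unfolding Gmat_def by (rule sum.mono_neutral_left) (use i in \<open>auto simp: qbinom_gt\<close>)
  also have "\<dots> = (\<Sum>k<m. GG i k * (\<Sum>l<m. pm k l * z ^ (s * l)))"
    by (rule sum.cong) (simp_all add: Pq_exp power_mult)
  also have "\<dots> = (\<Sum>l<m. Gp i l * z ^ (s * l))"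
    unfolding Gp_def sum_distrib_left sum_distrib_right
    by (subst sum.swap) (simp add: mult.assoc)
  finally show ?thesis .
qed

lemma T2:
  assumes i: "i < m" and j: "j < m"
  shows "Gp i j = (if i = j then 1 else 0)"
proof -
  have "(if i = j then of_nat m else 0) = (\<Sum>s<m. z ^ (i * s) * inverse z ^ (s * j))"
    by (rule orth[OF i j, symmetric])
  also have "\<dots> = (\<Sum>s<m. (\<Sum>l<m. Gp i l * z ^ (s * l)) * inverse z ^ (s * j))"
  proof (rule sum.cong)
    fix s assume "s \<in> {..<m}"
    have "z ^ (i * s) = z ^ (s * i)" by (simp add: mult.commute)
    also have "\<dots> = (\<Sum>l<m. Gp i l * z ^ (s * l))" by (rule T1[OF i])
    finally show "z ^ (i * s) * inverse z ^ (s * j) = (\<Sum>l<m. Gp i l * z ^ (s * l)) * inverse z ^ (s * j)" by simp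
  qed simp
  also have "\<dots> = (\<Sum>l<m. Gp i l * (\<Sum>s<m. z ^ (l * s) * inverse z ^ (s * j)))"
    unfolding sum_distrib_left sum_distrib_right
    by (subst sum.swap) (simp add: mult_ac)
  also have "\<dots> = (\<Sum>l<m. if l = j then Gp i j * of_nat m else 0)"
    by (rule sum.cong) (use j in \<open>simp_all add: orth\<close>)
  also have "\<dots> = Gp i j * of_nat m" using j by simp
  finally show ?thesis using m by (auto split: if_splits)
qed

lemma T3:
  assumes a: "a < m" and k: "k < m"
  shows "(\<Sum>l<m. pm k l * GG l a) = (if k = a then 1 else 0)"
proof -
  define r where "r k = (\<Sum>l<m. pm k l * GG l a) - (if k = a then 1 else 0)" for k
  have "r k = 0"
  proof (rule lower_inj[where L = GG and m = m])
    fix j assume j: "j < m"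
    have "(\<Sum>k<m. GG j k * r k) = (\<Sum>k<m. GG j k * (\<Sum>l<m. pm k l * GG l a)) - (\<Sum>k<m. if k = a then GG j a else 0)"
      unfolding sum_subtractf[symmetric] by (rule sum.cong) (auto simp: r_def algebra_simps)
    also have "(\<Sum>k<m. GG j k * (\<Sum>l<m. pm k l * GG l a)) = (\<Sum>l<m. Gp j l * GG l a)"
      unfolding Gp_def sum_distrib_left sum_distrib_right
      by (subst sum.swap) (simp add: mult.assoc)
    also have "\<dots> = (\<Sum>l<m. if l = j then GG j a else 0)"
      by (rule sum.cong) (use j in \<open>simp_all add: T2\<close>)
    finally show "(\<Sum>k<m. GG j k * r k) = 0" using a j by simp
  qed (use k in \<open>simp_all add: G_diag G_up\<close>)
  then show ?thesis by (simp add: r_def)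
qed

end

context rou begin

definition Pz :: "nat \<Rightarrow> complex" where "Pz i = (\<Prod>j\<in>{1..i}. 1 - z ^ j)"

definition Tv :: "(nat \<Rightarrow> complex) \<Rightarrow> nat \<Rightarrow> complex" where
  "Tv y i = (\<Sum>j<m. GG j i * y j)"

lemma Tv_conv: "i < m \<Longrightarrow> (\<Sum>j\<in>{i..<m}. y j * qbinom (inverse z) j i) = Tv y i"
  unfolding Tv_def Gmat_def
  by (rule sum.mono_neutral_cong_left) (auto simp: qbinom_gt)

lemma zq_pow: "z ^ n * inverse z ^ n = 1"
  using z_nz by (simp add: power_inverse)

lemma mD: "of_nat m / DD i = of_nat m / Pz i * z ^ (i ^ 2)"
proof -
  have "DD i = Pz i * inverse z ^ (i ^ 2)"
    using D_P[of i] z_nz unfolding Pz_def by (simp add: field_simps power_inverse)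
  then show ?thesis using z_nz by (simp add: power_inverse divide_inverse inverse_mult_distrib mult_ac)
qed

lemma T_omega:
  assumes a: "\<And>k. k < m \<Longrightarrow> a k = (\<Sum>l<m. GG k l * w l)" and i: "i < m"
  shows "Tv (omega m z a) i = of_nat m / DD i * w i"
proof -
  have "Tv (omega m z a) i = (\<Sum>j<m. GG j i * (\<Sum>k<m. Vmat z j k * (\<Sum>l<m. GG k l * w l)))"
    unfolding Tv_def omega_def Vmat_def by (rule sum.cong) (auto simp: a intro!: sum.cong simp add: mult.commute)
  also have "\<dots> = (\<Sum>l<m. mmult m (mmult m (mtrans GG) (Vmat z)) GG i l * w l)"
  proof -
    let ?f = "\<lambda>j k l. GG j i * Vmat z j k * GG k l * w l"
    have "(\<Sum>j<m. GG j i * (\<Sum>k<m. Vmat z j k * (\<Sum>l<m. GG k l * w l))) = (\<Sum>j<m. \<Sum>k<m. \<Sum>l<m. ?f j k l)"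
      by (simp add: sum_distrib_left mult.assoc)
    also have "\<dots> = (\<Sum>k<m. \<Sum>j<m. \<Sum>l<m. ?f j k l)" by (rule sum.swap)
    also have "\<dots> = (\<Sum>k<m. \<Sum>l<m. \<Sum>j<m. ?f j k l)" by (rule sum.cong[OF refl], rule sum.swap)
    also have "\<dots> = (\<Sum>l<m. \<Sum>k<m. \<Sum>j<m. ?f j k l)" by (rule sum.swap)
    also have "\<dots> = (\<Sum>l<m. mmult m (mmult m (mtrans GG) (Vmat z)) GG i l * w l)"
      by (simp add: mmult_def mtrans_def sum_distrib_right mult.assoc)
    finally show ?thesis .
  qed
  also have "\<dots> = (\<Sum>l<m. if l = i then of_nat m / DD i * w i else 0)"
    by (rule sum.cong) (use i in \<open>auto simp: M_eq\<close>)
  also have "\<dots> = of_nat m / DD i * w i" using i by simp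
  finally show ?thesis .
qed

lemma T_inj:
  assumes y1: "\<And>j. j \<ge> m \<Longrightarrow> y1 j = 0" and y2: "\<And>j. j \<ge> m \<Longrightarrow> y2 j = 0"
    and T: "\<And>i. i < m \<Longrightarrow> Tv y1 i = Tv y2 i"
  shows "y1 = y2"
proof
  fix j
  show "y1 j = y2 j"
  proof (cases "j < m")
    case True
    have "y1 j - y2 j = 0"
    proof (rule upper_inj[where U = "\<lambda>i k. GG k i" and m = m and r = "\<lambda>k. y1 k - y2 k"])
      fix i assume i: "i < m"
      have "(\<Sum>k<m. GG k i * (y1 k - y2 k)) = Tv y1 i - Tv y2 i"
        unfolding Tv_def sum_subtractf[symmetric] by (simp add: algebra_simps)
      then show "(\<Sum>k<m. GG k i * (y1 k - y2 k)) = 0" using T[OF i] by simp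
    qed (use True in \<open>simp_all add: G_diag G_up\<close>)
    then show ?thesis by simp
  next
    case False then show ?thesis using y1 y2 by simp
  qed
qed

lemma omega_prodZ: "a \<in> prodZ m z \<Longrightarrow> omega m z a \<in> prodZ m z"
  unfolding prodZ_def omega_def by (auto intro!: Zz_sum Zz_mult Zz_pow Zz_z)

lemma char:
  "omega_image m z = {y \<in> prodZ m z. \<forall>i<m. Tv y i \<in> {w * (of_nat m / Pz i) | w. w \<in> Zz z}}"
proof (intro equalityI subsetI)
  fix y assume "y \<in> omega_image m z"
  then obtain a where a: "a \<in> prodZ m z" and y: "y = omega m z a" unfolding omega_image_def by auto
  obtain w where w1: "\<forall>j. w j \<in> Zz z" and w3: "\<forall>j<m. (\<Sum>k<m. GG j k * w k) = a j"
    using lower_solve[where L = GG and m = m and b = a and z = z] a G_diag G_up G_Zz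
    unfolding prodZ_def by auto
  have "Tv y i \<in> {w * (of_nat m / Pz i) | w. w \<in> Zz z}" if i: "i < m" for i
  proof -
    have "Tv y i = of_nat m / DD i * w i" unfolding y by (rule T_omega) (use w3 i in auto)
    also have "\<dots> = (z ^ (i ^ 2) * w i) * (of_nat m / Pz i)" by (simp add: mD)
    finally show ?thesis using w1 by (auto intro!: Zz_mult Zz_pow Zz_z)
  qed
  then show "y \<in> {y \<in> prodZ m z. \<forall>i<m. Tv y i \<in> {w * (of_nat m / Pz i) | w. w \<in> Zz z}}"
    using omega_prodZ[OF a] y by auto
next
  fix y assume "y \<in> {y \<in> prodZ m z. \<forall>i<m. Tv y i \<in> {w * (of_nat m / Pz i) | w. w \<in> Zz z}}"
  then have yZ: "y \<in> prodZ m z" and yT: "\<forall>i<m. \<exists>w. Tv y i = w * (of_nat m / Pz i) \<and> w \<in> Zz z" by auto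
  then obtain W where W: "\<forall>i<m. Tv y i = W i * (of_nat m / Pz i) \<and> W i \<in> Zz z" by metis
  define w where "w i = W i * inverse z ^ (i ^ 2)" for i
  define a where "a k = (if k < m then (\<Sum>l<m. GG k l * w l) else 0)" for k
  have aZ: "a \<in> prodZ m z" unfolding prodZ_def a_def w_def
    using W by (auto intro!: Zz_sum Zz_mult G_Zz Zz_pow q_Zz)
  have "omega m z a = y"
  proof (rule T_inj)
    show "omega m z a j = 0" if "m \<le> j" for j using that by (simp add: omega_def)
    show "y j = 0" if "m \<le> j" for j using that yZ by (simp add: prodZ_def)
    fix i assume i: "i < m"
    have "Tv (omega m z a) i = of_nat m / DD i * w i" by (rule T_omega) (use i in \<open>auto simp: a_def\<close>)
    also have "\<dots> = W i * (of_nat m / Pz i) * (z ^ (i ^ 2) * inverse z ^ (i ^ 2))"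
      by (simp add: mD w_def mult_ac)
    also have "\<dots> = Tv y i" using W i zq_pow by simp
    finally show "Tv (omega m z a) i = Tv y i" .
  qed
  then show "y \<in> omega_image m z" using aZ unfolding omega_image_def by blast
qed

end

context rou begin

definition cj :: "nat \<Rightarrow> complex" where
  "cj j = (-1) ^ j * z ^ (j choose 2) * (of_nat m / Pz j)"

lemma m1sq: "(-1::complex) ^ j * (-1) ^ j = 1"
  by (simp add: power_add[symmetric])

lemma cj_nz: "j < m \<Longrightarrow> cj j \<noteq> 0"
  using P_nz[of j] z_nz m unfolding cj_def Pz_def by simp

lemma bvec_pm: "k < m \<Longrightarrow> bvec m z j k = cj j * pm j k"
proof -
  assume k: "k < m"
  have "cj j * pm j k = ((-1) ^ j * (-1) ^ j) * (z ^ (j choose 2) * inverse z ^ (j choose 2))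
      * ((-1) ^ k * z ^ (k choose 2) * (of_nat m / Pz j) * qbinom z j k)"
    by (simp add: cj_def pm_def sg_def mult_ac)
  also have "\<dots> = bvec m z j k" using k by (simp add: m1sq zq_pow bvec_def Pz_def)
  finally show ?thesis by simp
qed

lemma bvec_zero: "m \<le> k \<Longrightarrow> bvec m z j k = 0" by (simp add: bvec_def)

lemma T_bvec:
  assumes i: "i < m" and j: "j < m"
  shows "Tv (bvec m z j) i = (if i = j then cj i else 0)"
proof -
  have "Tv (bvec m z j) i = cj j * (\<Sum>k<m. pm j k * GG k i)"
    unfolding Tv_def sum_distrib_left by (rule sum.cong) (simp_all add: bvec_pm mult_ac)
  also have "\<dots> = (if i = j then cj i else 0)" using T3[OF i j] by auto
  finally show ?thesis .
qed

lemma bvec_in: assumes j: "j < m" shows "bvec m z j \<in> omega_image m z"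
proof -
  define u where "u = (-1) ^ j * z ^ (j choose 2) * inverse z ^ (j ^ 2)"
  define a where "a k = (if k < m then GG k j * u else 0)" for k
  define w where "w l = (if l = j then u else 0)" for l
  have uZ: "u \<in> Zz z" unfolding u_def by (intro Zz_mult Zz_pow Zz_z q_Zz Zz_m1pow)
  have aZ: "a \<in> prodZ m z" unfolding prodZ_def a_def using uZ by (auto intro!: Zz_mult G_Zz)
  have "omega m z a = bvec m z j"
  proof (rule T_inj)
    show "omega m z a k = 0" if "m \<le> k" for k using that by (simp add: omega_def)
    show "bvec m z j k = 0" if "m \<le> k" for k using that by (rule bvec_zero)
    fix i assume i: "i < m"
    have "Tv (omega m z a) i = of_nat m / DD i * w i"
    proof (rule T_omega[OF _ i])
      fix k assume "k < m"
      moreover have "(\<Sum>l<m. GG k l * w l) = (\<Sum>l<m. if l = j then GG k j * u else 0)"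
        by (rule sum.cong) (auto simp: w_def)
      ultimately show "a k = (\<Sum>l<m. GG k l * w l)" using j by (simp add: a_def)
    qed
    also have "\<dots> = (if i = j then cj i * (z ^ (i ^ 2) * inverse z ^ (i ^ 2)) else 0)"
      by (simp add: w_def mD u_def cj_def mult_ac)
    also have "\<dots> = Tv (bvec m z j) i" using T_bvec[OF i j] zq_pow by simp
    finally show "Tv (omega m z a) i = Tv (bvec m z j) i" .
  qed
  then show ?thesis unfolding omega_image_def using aZ by (metis image_eqI)
qed

lemma bvec_Zz: "j < m \<Longrightarrow> bvec m z j k \<in> Zz z"
proof -
  assume j: "j < m"
  have "bvec m z j \<in> prodZ m z" using bvec_in[OF j] omega_prodZ unfolding omega_image_def by auto
  then show ?thesis unfolding prodZ_def using Zz_0 by (cases "k < m") auto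
qed

lemma T_lin: "i < m \<Longrightarrow> Tv (\<lambda>k. \<Sum>j<m. c j * bvec m z j k) i = c i * cj i"
proof -
  assume i: "i < m"
  have "Tv (\<lambda>k. \<Sum>j<m. c j * bvec m z j k) i = (\<Sum>j<m. c j * Tv (bvec m z j) i)"
    unfolding Tv_def sum_distrib_left
    by (subst sum.swap) (simp add: mult_ac)
  also have "\<dots> = (\<Sum>j<m. if j = i then c i * cj i else 0)"
    by (rule sum.cong) (use i in \<open>auto simp: T_bvec\<close>)
  finally show ?thesis using i by simp
qed

lemma part5: "omega_image m z = {(\<lambda>k. \<Sum>j<m. c j * bvec m z j k) | c. c \<in> prodZ m z}"
proof (intro equalityI subsetI)
  fix y assume "y \<in> omega_image m z"
  then have yZ: "y \<in> prodZ m z" and yT: "\<forall>i<m. \<exists>w. Tv y i = w * (of_nat m / Pz i) \<and> w \<in> Zz z"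
    unfolding char by auto
  then obtain W where W: "\<forall>i<m. Tv y i = W i * (of_nat m / Pz i) \<and> W i \<in> Zz z" by metis
  define c where "c i = (if i < m then W i * (-1) ^ i * inverse z ^ (i choose 2) else 0)" for i
  have cZ: "c \<in> prodZ m z" unfolding prodZ_def c_def using W
    by (auto intro!: Zz_mult Zz_pow q_Zz Zz_m1pow)
  have "(\<lambda>k. \<Sum>j<m. c j * bvec m z j k) = y"
  proof (rule T_inj)
    show "(\<Sum>j<m. c j * bvec m z j k) = 0" if "m \<le> k" for k using that by (simp add: bvec_zero)
    show "y k = 0" if "m \<le> k" for k using that yZ by (simp add: prodZ_def)
    fix i assume i: "i < m"
    have "Tv (\<lambda>k. \<Sum>j<m. c j * bvec m z j k) i = c i * cj i" by (rule T_lin[OF i])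
    also have "\<dots> = W i * (of_nat m / Pz i) * (((-1) ^ i * (-1) ^ i) * (z ^ (i choose 2) * inverse z ^ (i choose 2)))"
      using i by (simp add: c_def cj_def mult_ac)
    also have "\<dots> = Tv y i" using W i by (simp add: m1sq zq_pow)
    finally show "Tv (\<lambda>k. \<Sum>j<m. c j * bvec m z j k) i = Tv y i" .
  qed
  then show "y \<in> {(\<lambda>k. \<Sum>j<m. c j * bvec m z j k) | c. c \<in> prodZ m z}" using cZ by blast
next
  fix y assume "y \<in> {(\<lambda>k. \<Sum>j<m. c j * bvec m z j k) | c. c \<in> prodZ m z}"
  then obtain c where cZ: "c \<in> prodZ m z" and y: "y = (\<lambda>k. \<Sum>j<m. c j * bvec m z j k)" by blast
  have "y \<in> prodZ m z" unfolding prodZ_def y using cZ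
    by (auto simp: prodZ_def bvec_zero intro!: Zz_sum Zz_mult bvec_Zz)
  moreover have "Tv y i \<in> {w * (of_nat m / Pz i) | w. w \<in> Zz z}" if i: "i < m" for i
  proof -
    have "Tv y i = (c i * (-1) ^ i * z ^ (i choose 2)) * (of_nat m / Pz i)"
      unfolding y T_lin[OF i] by (simp add: cj_def mult_ac)
    moreover have "c i * (-1) ^ i * z ^ (i choose 2) \<in> Zz z"
      using cZ i unfolding prodZ_def by (auto intro!: Zz_mult Zz_pow Zz_z Zz_m1pow)
    ultimately show ?thesis by blast
  qed
  ultimately show "y \<in> omega_image m z" unfolding char by blast
qed

lemma part6: "(\<lambda>k. \<Sum>j<m. c j * bvec m z j k) = (\<lambda>k. 0) \<Longrightarrow> j < m \<Longrightarrow> c j = 0"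
proof -
  assume h: "(\<lambda>k. \<Sum>j<m. c j * bvec m z j k) = (\<lambda>k. 0)" and j: "j < m"
  have "c j * cj j = Tv (\<lambda>k. 0) j" using T_lin[OF j, of c] h by simp
  also have "\<dots> = 0" by (simp add: Tv_def)
  finally show ?thesis using cj_nz[OF j] by simp
qed

end

theorem proposition3p8:
  fixes m :: nat and z :: complex
  assumes m: "m \<ge> 1"
    and root: "z ^ m = 1"
    and prim: "\<And>k. 0 < k \<Longrightarrow> k < m \<Longrightarrow> z ^ k \<noteq> 1"
  shows
    "(\<forall>i<m. \<forall>j<m.
        mmult m (mmult m (mtrans (Gmat (inverse z))) (Vmat z)) (Gmat (inverse z)) i j
          = (if i = j then of_nat m / Ddiag (inverse z) i else 0))
     \<and> (\<forall>i<m. of_nat m / Ddiag (inverse z) i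
          = of_nat m * z ^ (i ^ 2) / (\<Prod>j\<in>{1..i}. 1 - z ^ j))
     \<and> omega_image m z =
        {y \<in> prodZ m z. \<forall>i<m.
           (\<Sum>j\<in>{i..<m}. y j * qbinom (inverse z) j i)
             \<in> {w * (of_nat m / (\<Prod>j\<in>{1..i}. 1 - z ^ j)) | w. w \<in> Zz z}}
     \<and> (\<forall>j<m. bvec m z j \<in> omega_image m z)
     \<and> omega_image m z = {(\<lambda>k. \<Sum>j<m. c j * bvec m z j k) | c. c \<in> prodZ m z}
     \<and> (\<forall>c. (\<forall>j<m. c j \<in> Zz z) \<longrightarrow> (\<lambda>k. \<Sum>j<m. c j * bvec m z j k) = (\<lambda>k. 0)
           \<longrightarrow> (\<forall>j<m. c j = 0))"
proof -
  interpret rou m z using m root prim by unfold_locales auto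
  have p1: "\<forall>i<m. \<forall>j<m.
        mmult m (mmult m (mtrans (Gmat (inverse z))) (Vmat z)) (Gmat (inverse z)) i j
          = (if i = j then of_nat m / Ddiag (inverse z) i else 0)"
    by (auto simp: M_eq)
  have p2: "\<forall>i<m. of_nat m / Ddiag (inverse z) i
          = of_nat m * z ^ (i ^ 2) / (\<Prod>j\<in>{1..i}. 1 - z ^ j)"
    by (simp add: mD Pz_def)
  have p3: "omega_image m z =
        {y \<in> prodZ m z. \<forall>i<m.
           (\<Sum>j\<in>{i..<m}. y j * qbinom (inverse z) j i)
             \<in> {w * (of_nat m / (\<Prod>j\<in>{1..i}. 1 - z ^ j)) | w. w \<in> Zz z}}"
    unfolding char by (rule Collect_cong) (auto simp: Tv_conv Pz_def)
  show ?thesis using p1 p2 p3 bvec_in part5 part6 by blast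
qed

end
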